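(* Let $n$ be a power of $2$, $\theta\in\mathbb{R}^{n\times n}$ and $\epsilon>0$. There is a universal constant $C>0$ such that the partition produced by the $(\mathrm{TV},\epsilon)$ division scheme satisfies $$|P_{\theta,\epsilon}| \leq 1 + C\,\mathrm{TV}(\theta)\,\epsilon^{-1}\log n,$$ and for every $V>0$, $$\log|\mathcal{P}(V,n,\epsilon)| \leq C\, V\epsilon^{-1}\log n.$$
   Context: $\mathrm{TV}(\theta) = \sum_{(u,v)\in E}|\theta_u-\theta_v|$ (unnormalized), $E$ being the edges of the grid graph on the index set of the matrix (pairs of entries at $\ell_1$-distance 1). The $(\mathrm{TV},\epsilon)$ scheme: start with the whole matrix; if its $\mathrm{TV}\le\epsilon$, stop; otherwise split it dyadically into four equal-size submatrices (top-left, top-right, bottom-left, bottom-right, each with half the rows and half the columns). At each subsequent round, every current submatrix with $\mathrm{TV} > \epsilon$ is split dyadically into four in the same way; repeat until every part has $\mathrm{TV}\le\epsilon$. The resulting partition of $[n]\times[n]$ into rectangular blocks is $P_{\theta,\epsilon}$, with $|P_{\theta,\epsilon}|$ its number of blocks. $\mathcal{P}(V,n,\epsilon) = \{P_{\theta,\epsilon}: \theta\in\mathbb{R}^{n\times n},\ \mathrm{TV}(\theta)\le V\}$. *)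

theory Defs
  imports Complex_Main
begin

(* A matrix theta in R^{n x n} is a function nat => nat => real, of which only the
   entries with indices in {0..<n} x {0..<n} matter. *)

(* Unnormalized total variation of theta restricted to an index set B:
   sum over grid edges (pairs of entries of B at l1-distance 1), each edge counted once. *)
definition TV_on :: "(nat \<Rightarrow> nat \<Rightarrow> real) \<Rightarrow> (nat \<times> nat) set \<Rightarrow> real" where
  "TV_on \<theta> B =
     (\<Sum>(i,j)\<in>B. if (i, Suc j) \<in> B then \<bar>\<theta> i j - \<theta> i (Suc j)\<bar> else 0)
   + (\<Sum>(i,j)\<in>B. if (Suc i, j) \<in> B then \<bar>\<theta> i j - \<theta> (Suc i) j\<bar> else 0)"

definition TV :: "(nat \<Rightarrow> nat \<Rightarrow> real) \<Rightarrow> nat \<Rightarrow> real" where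
  "TV \<theta> n = TV_on \<theta> ({0..<n} \<times> {0..<n})"

definition block :: "nat \<Rightarrow> nat \<Rightarrow> nat \<Rightarrow> (nat \<times> nat) set" where
  "block r c k = {r..<r + 2^k} \<times> {c..<c + 2^k}"

(* The (TV, eps) dyadic division scheme applied to block r c k:
   stop if its TV is <= eps, otherwise split into the four dyadic quadrants and recurse.
   (A 1x1 block has TV 0 <= eps when eps > 0, so the k = 0 case agrees with the scheme.) *)
primrec dyadic_part ::
  "(nat \<Rightarrow> nat \<Rightarrow> real) \<Rightarrow> real \<Rightarrow> nat \<Rightarrow> nat \<Rightarrow> nat \<Rightarrow> (nat \<times> nat) set set" where
  "dyadic_part \<theta> \<epsilon> r c 0 = {block r c 0}"
| "dyadic_part \<theta> \<epsilon> r c (Suc k) =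
     (if TV_on \<theta> (block r c (Suc k)) \<le> \<epsilon> then {block r c (Suc k)}
      else dyadic_part \<theta> \<epsilon> r c k \<union> dyadic_part \<theta> \<epsilon> r (c + 2^k) k
         \<union> dyadic_part \<theta> \<epsilon> (r + 2^k) c k \<union> dyadic_part \<theta> \<epsilon> (r + 2^k) (c + 2^k) k)"

definition P_part :: "(nat \<Rightarrow> nat \<Rightarrow> real) \<Rightarrow> real \<Rightarrow> nat \<Rightarrow> (nat \<times> nat) set set" where
  "P_part \<theta> \<epsilon> k = dyadic_part \<theta> \<epsilon> 0 0 k"

definition P_family :: "real \<Rightarrow> nat \<Rightarrow> real \<Rightarrow> (nat \<times> nat) set set set" where
  "P_family V k \<epsilon> = {P_part \<theta> \<epsilon> k | \<theta>. TV \<theta> (2^k) \<le> V}"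

end

theory Submission
  imports Defs "HOL-Analysis.Harmonic_Numbers"
begin

definition ecost :: "(nat \<Rightarrow> nat \<Rightarrow> real) \<Rightarrow> (nat \<times> nat) set \<Rightarrow> nat \<times> nat \<Rightarrow> real" where
  "ecost \<theta> B x = (case x of (i,j) \<Rightarrow>
     (if (i, Suc j) \<in> B then \<bar>\<theta> i j - \<theta> i (Suc j)\<bar> else 0)
   + (if (Suc i, j) \<in> B then \<bar>\<theta> i j - \<theta> (Suc i) j\<bar> else 0))"

lemma TV_on_ecost: "TV_on \<theta> B = (\<Sum>x\<in>B. ecost \<theta> B x)"
  unfolding TV_on_def ecost_def by (simp add: sum.distrib[symmetric] case_prod_beta)

lemma ecost_nonneg: "ecost \<theta> B x \<ge> 0"
  unfolding ecost_def by (auto simp: case_prod_beta)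

lemma ecost_mono: "A \<subseteq> B \<Longrightarrow> ecost \<theta> A x \<le> ecost \<theta> B x"
  unfolding ecost_def by (auto simp: case_prod_beta intro!: add_mono)

lemma TV_on_nonneg: "TV_on \<theta> B \<ge> 0"
  unfolding TV_on_ecost by (simp add: sum_nonneg ecost_nonneg)

lemma TV_on_le_part: "A \<subseteq> B \<Longrightarrow> TV_on \<theta> A \<le> (\<Sum>x\<in>A. ecost \<theta> B x)"
  unfolding TV_on_ecost by (rule sum_mono, rule ecost_mono)

lemma quad_le:
  assumes fin: "finite B" and s: "A1 \<subseteq> B" "A2 \<subseteq> B" "A3 \<subseteq> B" "A4 \<subseteq> B"
    and d: "A1 \<inter> A2 = {}" "A1 \<inter> A3 = {}" "A1 \<inter> A4 = {}" "A2 \<inter> A3 = {}" "A2 \<inter> A4 = {}" "A3 \<inter> A4 = {}"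
  shows "TV_on \<theta> A1 + TV_on \<theta> A2 + TV_on \<theta> A3 + TV_on \<theta> A4 \<le> TV_on \<theta> B"
proof -
  let ?f = "ecost \<theta> B"
  have f: "finite A1" "finite A2" "finite A3" "finite A4" using s fin by (auto intro: finite_subset)
  have "TV_on \<theta> A1 + TV_on \<theta> A2 + TV_on \<theta> A3 + TV_on \<theta> A4
        \<le> sum ?f A1 + sum ?f A2 + sum ?f A3 + sum ?f A4"
    using TV_on_le_part[OF s(1), of \<theta>] TV_on_le_part[OF s(2), of \<theta>] TV_on_le_part[OF s(3), of \<theta>] TV_on_le_part[OF s(4), of \<theta>]
    by linarith
  also have "\<dots> = sum ?f (A1 \<union> A2 \<union> A3 \<union> A4)"
    using f d by (simp add: sum.union_disjoint Int_Un_distrib2)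
  also have "\<dots> \<le> sum ?f B"
    using s fin by (intro sum_mono2) (auto simp: ecost_nonneg)
  also have "\<dots> = TV_on \<theta> B" by (simp add: TV_on_ecost)
  finally show ?thesis .
qed

lemma block_quad:
  "TV_on \<theta> (block r c k) + TV_on \<theta> (block r (c + 2^k) k) + TV_on \<theta> (block (r + 2^k) c k)
   + TV_on \<theta> (block (r + 2^k) (c + 2^k) k) \<le> TV_on \<theta> (block r c (Suc k))"
  by (rule quad_le) (auto simp: block_def)

lemma card_Un4: "card (A \<union> B \<union> C \<union> D) \<le> card A + card B + card C + card D"
  using card_Un_le[of "A \<union> B \<union> C" D] card_Un_le[of "A \<union> B" C] card_Un_le[of A B] by linarith

lemma card_part:
  assumes e: "e > 0"
  shows "real (card (dyadic_part \<theta> e r c k)) \<le> 1 + 3 * real k * TV_on \<theta> (block r c k) / e"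
proof (induction k arbitrary: r c)
  case 0
  then show ?case using e by (simp)
next
  case (Suc k)
  let ?T = "TV_on \<theta> (block r c (Suc k))"
  show ?case
  proof (cases "?T \<le> e")
    case True
    then show ?thesis using e TV_on_nonneg[of \<theta> "block r c (Suc k)"] by simp
  next
    case False
    let ?t1 = "TV_on \<theta> (block r c k)" and ?t2 = "TV_on \<theta> (block r (c + 2^k) k)"
      and ?t3 = "TV_on \<theta> (block (r + 2^k) c k)" and ?t4 = "TV_on \<theta> (block (r + 2^k) (c + 2^k) k)"
    have c: "card (dyadic_part \<theta> e r c (Suc k))
        \<le> card (dyadic_part \<theta> e r c k) + card (dyadic_part \<theta> e r (c + 2^k) k)
         + card (dyadic_part \<theta> e (r + 2^k) c k) + card (dyadic_part \<theta> e (r + 2^k) (c + 2^k) k)"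
    proof -
      have "dyadic_part \<theta> e r c (Suc k) = dyadic_part \<theta> e r c k \<union> dyadic_part \<theta> e r (c + 2^k) k
         \<union> dyadic_part \<theta> e (r + 2^k) c k \<union> dyadic_part \<theta> e (r + 2^k) (c + 2^k) k" using False by simp
      then show ?thesis using card_Un4 by metis
    qed
    have "real (card (dyadic_part \<theta> e r c (Suc k))) \<le> 4 + 3 * real k * (?t1 + ?t2 + ?t3 + ?t4) / e"
      using c Suc.IH[of r c] Suc.IH[of r "c + 2^k"] Suc.IH[of "r + 2^k" c] Suc.IH[of "r + 2^k" "c + 2^k"]
      by (simp add: add_divide_distrib distrib_left)
    also have "\<dots> \<le> 4 + 3 * real k * ?T / e"
      using block_quad[of \<theta> r c k] e
      by (intro add_left_mono divide_right_mono mult_left_mono) auto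
    also have "\<dots> \<le> 1 + 3 * real (Suc k) * ?T / e"
    proof -
      have "3 < 3 * ?T / e" using False e by (simp add: field_simps)
      then show ?thesis by (simp add: distrib_left distrib_right add_divide_distrib)
    qed
    finally show ?thesis .
  qed
qed


lemma pow_bound: "(j::nat) \<ge> 1 \<Longrightarrow> 1 + (j+1)^4 \<le> 32^j"
proof (induction j rule: dec_induct)
  case base then show ?case by (simp add: eval_nat_numeral)
next
  case (step j)
  have "(Suc j + 1)^4 \<le> (2*(j+1))^4" by (intro power_mono) auto
  also have "\<dots> = 2^4 * (j+1)^4" by (rule power_mult_distrib)
  also have "\<dots> = 16 * (j+1)^4" by simp
  finally show ?case using step.IH by simp
qed

lemma floor_facts:
  assumes "(t::real) \<ge> 0" "e > 0"
  shows "real (nat \<lfloor>t/e\<rfloor>) \<le> t/e" "t < (real (nat \<lfloor>t/e\<rfloor>) + 1) * e"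
proof -
  have "t/e \<ge> 0" using assms by simp
  then have r: "real (nat \<lfloor>t/e\<rfloor>) = of_int \<lfloor>t/e\<rfloor>" by simp
  show "real (nat \<lfloor>t/e\<rfloor>) \<le> t/e" unfolding r by simp
  have "t/e < of_int \<lfloor>t/e\<rfloor> + 1" by linarith
  then show "t < (real (nat \<lfloor>t/e\<rfloor>) + 1) * e" unfolding r using assms by (simp add: field_simps)
qed

definition GG :: "real \<Rightarrow> nat \<Rightarrow> nat \<Rightarrow> nat \<Rightarrow> nat \<Rightarrow> (nat \<times> nat) set set set" where
  "GG e r c k j = {dyadic_part \<theta> e r c k | \<theta>. TV_on \<theta> (block r c k) < (real j + 1) * e}"

lemma GG_bound:
  assumes e: "e > 0"
  shows "finite (GG e r c k j) \<and> card (GG e r c k j) \<le> 32^(k*j)"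
proof (induction k arbitrary: r c j)
  case 0
  have "GG e r c 0 j \<subseteq> {{block r c 0}}" by (auto simp: GG_def)
  moreover have "finite (GG e r c 0 j)" using calculation by (rule finite_subset) simp
  moreover have "card (GG e r c 0 j) \<le> card {{block r c 0}}" using calculation by (intro card_mono) auto
  ultimately show ?case by simp
next
  case (Suc k)
  show ?case
  proof (cases "j = 0")
    case True
    have "GG e r c (Suc k) j \<subseteq> {{block r c (Suc k)}}" using True by (auto simp: GG_def)
    moreover have "finite (GG e r c (Suc k) j)" using calculation by (rule finite_subset) simp
    moreover have "card (GG e r c (Suc k) j) \<le> card {{block r c (Suc k)}}" using calculation by (intro card_mono) auto
    ultimately show ?thesis using True by simp
  next
    case False
    define T where "T = {x \<in> {0..j}\<times>{0..j}\<times>{0..j}\<times>{0..j}. case x of (a,b,c',d) \<Rightarrow> a+b+c'+d \<le> j}"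
    define Q where "Q = (\<lambda>(a,b,c',d). GG e r c k a \<times> GG e r (c+2^k) k b \<times> GG e (r+2^k) c k c' \<times> GG e (r+2^k) (c+2^k) k d)"
    define U where "U = (\<lambda>(A,B,C,D). A\<union>B\<union>C\<union>(D::(nat\<times>nat) set set)) ` (\<Union>x\<in>T. Q x)"
    have finT: "finite T" unfolding T_def by simp
    have cardT: "card T \<le> (j+1)^4"
    proof -
      have "card T \<le> card ({0..j}\<times>{0..j}\<times>{0..j}\<times>{0..j::nat})"
        unfolding T_def by (intro card_mono) auto
      also have "\<dots> = (j+1)^4" by (simp add: card_cartesian_product power4_eq_xxxx)
      finally show ?thesis .
    qed
    have Qx: "finite (Q x) \<and> card (Q x) \<le> 32^(k*j)" if "x \<in> T" for x
    proof -
      obtain a b c' d where x: "x = (a,b,c',d)" by (cases x) auto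
      have s: "a+b+c'+d \<le> j" using that x T_def by auto
      have "card (Q x) = card (GG e r c k a) * card (GG e r (c+2^k) k b) * card (GG e (r+2^k) c k c')
                         * card (GG e (r+2^k) (c+2^k) k d)"
        unfolding x Q_def by (simp add: card_cartesian_product)
      also have "\<dots> \<le> 32^(k*a) * 32^(k*b) * 32^(k*c') * 32^(k*d)"
        using Suc.IH by (intro mult_mono) auto
      also have "\<dots> = 32^(k*(a+b+c'+d))" by (simp add: power_add[symmetric] distrib_left)
      also have "\<dots> \<le> 32^(k*j)" using s by (intro power_increasing) auto
      finally show ?thesis unfolding x Q_def using Suc.IH by auto
    qed
    have finU: "finite U" unfolding U_def using finT Qx by auto
    have "card U \<le> card (\<Union>x\<in>T. Q x)" unfolding U_def by (rule card_image_le) (use finT Qx in auto)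
    also have "\<dots> \<le> (\<Sum>x\<in>T. card (Q x))" by (rule card_UN_le[OF finT])
    also have "\<dots> \<le> card T * 32^(k*j)" using Qx sum_bounded_above[of T "\<lambda>x. card (Q x)"] by auto
    also have "\<dots> \<le> (j+1)^4 * 32^(k*j)" using cardT by simp
    finally have cU: "card U \<le> (j+1)^4 * 32^(k*j)" .
    have sub: "GG e r c (Suc k) j \<subseteq> insert {block r c (Suc k)} U"
    proof
      fix P assume "P \<in> GG e r c (Suc k) j"
      then obtain \<theta> where P: "P = dyadic_part \<theta> e r c (Suc k)"
        and tv: "TV_on \<theta> (block r c (Suc k)) < (real j + 1) * e" unfolding GG_def by auto
      show "P \<in> insert {block r c (Suc k)} U"
      proof (cases "TV_on \<theta> (block r c (Suc k)) \<le> e")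
        case True then show ?thesis using P by simp
      next
        case F: False
        define t1 where "t1 = TV_on \<theta> (block r c k)"
        define t2 where "t2 = TV_on \<theta> (block r (c + 2^k) k)"
        define t3 where "t3 = TV_on \<theta> (block (r + 2^k) c k)"
        define t4 where "t4 = TV_on \<theta> (block (r + 2^k) (c + 2^k) k)"
        define a1 where "a1 = nat \<lfloor>t1/e\<rfloor>"
        define a2 where "a2 = nat \<lfloor>t2/e\<rfloor>"
        define a3 where "a3 = nat \<lfloor>t3/e\<rfloor>"
        define a4 where "a4 = nat \<lfloor>t4/e\<rfloor>"
        have nn: "t1 \<ge> 0" "t2 \<ge> 0" "t3 \<ge> 0" "t4 \<ge> 0" unfolding t1_def t2_def t3_def t4_def
          by (simp_all add: TV_on_nonneg)
        note f1 = floor_facts[OF nn(1) e, folded a1_def]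
        note f2 = floor_facts[OF nn(2) e, folded a2_def]
        note f3 = floor_facts[OF nn(3) e, folded a3_def]
        note f4 = floor_facts[OF nn(4) e, folded a4_def]
        have q: "t1 + t2 + t3 + t4 \<le> TV_on \<theta> (block r c (Suc k))"
          unfolding t1_def t2_def t3_def t4_def by (rule block_quad)
        have "real (a1+a2+a3+a4) \<le> (t1+t2+t3+t4)/e"
          using f1(1) f2(1) f3(1) f4(1) by (simp add: add_divide_distrib)
        also have "\<dots> \<le> TV_on \<theta> (block r c (Suc k)) / e" using q e by (simp add: divide_right_mono)
        also have "\<dots> < real j + 1" using tv e by (simp add: field_simps)
        finally have sj: "a1+a2+a3+a4 \<le> j" by linarith
        have inT: "(a1,a2,a3,a4) \<in> T" unfolding T_def using sj by auto
        have inQ: "(dyadic_part \<theta> e r c k, dyadic_part \<theta> e r (c + 2^k) k,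
                    dyadic_part \<theta> e (r + 2^k) c k, dyadic_part \<theta> e (r + 2^k) (c + 2^k) k) \<in> Q (a1,a2,a3,a4)"
          unfolding Q_def GG_def using f1(2) f2(2) f3(2) f4(2) unfolding t1_def t2_def t3_def t4_def
          by blast
        have "P = dyadic_part \<theta> e r c k \<union> dyadic_part \<theta> e r (c + 2^k) k
                \<union> dyadic_part \<theta> e (r + 2^k) c k \<union> dyadic_part \<theta> e (r + 2^k) (c + 2^k) k"
          using P F by simp
        then have "P \<in> U" unfolding U_def using inT inQ by (auto intro!: image_eqI)
        then show ?thesis by simp
      qed
    qed
    have fin: "finite (GG e r c (Suc k) j)" using sub finU finite_subset by blast
    have "card (GG e r c (Suc k) j) \<le> card (insert {block r c (Suc k)} U)"
      using sub finU by (intro card_mono) auto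
    also have "\<dots> \<le> 1 + card U" by (simp add: card_insert_if finU)
    also have "\<dots> \<le> 1 + (j+1)^4 * 32^(k*j)" using cU by simp
    also have "\<dots> \<le> (1 + (j+1)^4) * 32^(k*j)" by (simp add: distrib_right)
    also have "\<dots> \<le> 32^j * 32^(k*j)" using pow_bound[of j] False by (intro mult_right_mono) auto
    also have "\<dots> = 32^(Suc k * j)" by (simp add: power_add[symmetric])
    finally show ?thesis using fin by simp
  qed
qed


theorem lemma4p2:
  shows "\<exists>C>0. \<forall>(n::nat) (k::nat) (\<theta>::nat \<Rightarrow> nat \<Rightarrow> real) (\<epsilon>::real).
           n = 2^k \<and> \<epsilon> > 0 \<longrightarrow>
             real (card (P_part \<theta> \<epsilon> k)) \<le> 1 + C * TV \<theta> n / \<epsilon> * ln (real n)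
           \<and> (\<forall>V>0. ln (real (card (P_family V k \<epsilon>))) \<le> C * V / \<epsilon> * ln (real n))"
proof (intro exI[of _ 5] conjI allI impI)
  show "(0::real) < 5" by simp
  fix n k :: nat and \<theta> :: "nat \<Rightarrow> nat \<Rightarrow> real" and e :: real
  assume a: "n = 2^k \<and> e > 0"
  then have n: "n = 2^k" and e: "e > 0" by auto
  have lnn: "ln (real n) = real k * ln 2" using n by (simp add: ln_realpow)
  have l2: "ln (2::real) \<ge> 2/3" by (rule ln2_ge_two_thirds)
  have TVb: "TV \<theta> n = TV_on \<theta> (block 0 0 k)" using n by (simp add: TV_def block_def)
  have "real (card (P_part \<theta> e k)) \<le> 1 + 3 * real k * TV \<theta> n / e"
    using card_part[OF e, of \<theta> 0 0 k] TVb by (simp add: P_part_def)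
  also have "\<dots> \<le> 1 + 5 * TV \<theta> n / e * ln (real n)"
  proof -
    have x: "TV \<theta> n / e \<ge> 0" using TVb TV_on_nonneg e by simp
    have h: "3 \<le> 5 * ln (2::real)" using l2 by simp
    have "3 * real k \<le> 5 * (real k * ln 2)" using mult_right_mono[OF h, of "real k"] by (simp add: algebra_simps)
    then have "3 * real k * (TV \<theta> n / e) \<le> 5 * (real k * ln 2) * (TV \<theta> n / e)"
      using x by (rule mult_right_mono)
    then show ?thesis unfolding lnn by (simp add: field_simps)
  qed
  finally show "real (card (P_part \<theta> e k)) \<le> 1 + 5 * TV \<theta> n / e * ln (real n)" .
  fix V :: real assume V: "V > 0"
  define j where "j = nat \<lfloor>V/e\<rfloor>"
  note fj = floor_facts[OF less_imp_le[OF V] e, folded j_def]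
  have sub: "P_family V k e \<subseteq> GG e 0 0 k j"
  proof
    fix P assume "P \<in> P_family V k e"
    then obtain \<theta>' where P: "P = P_part \<theta>' e k" and tv: "TV \<theta>' (2^k) \<le> V"
      unfolding P_family_def by auto
    have "TV_on \<theta>' (block 0 0 k) < (real j + 1) * e"
      using tv fj(2) by (simp add: TV_def block_def)
    then show "P \<in> GG e 0 0 k j" unfolding GG_def P P_part_def by blast
  qed
  have G: "finite (GG e 0 0 k j)" "card (GG e 0 0 k j) \<le> 32^(k*j)" using GG_bound[OF e] by auto
  have ne: "P_part (\<lambda>_ _. 0) e k \<in> P_family V k e"
  proof -
    have "TV (\<lambda>_ _. 0::real) (2^k) = 0" by (simp add: TV_def TV_on_def cong: if_cong)
    then show ?thesis unfolding P_family_def using V by force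
  qed
  have fin: "finite (P_family V k e)" using sub G(1) finite_subset by blast
  have c1: "card (P_family V k e) \<ge> 1" using ne fin
    by (metis One_nat_def Suc_leI card_gt_0_iff empty_iff)
  have "card (P_family V k e) \<le> 32^(k*j)" using card_mono[OF G(1) sub] G(2) by simp
  then have "ln (real (card (P_family V k e))) \<le> ln (real (32^(k*j)))"
    using c1 by (subst ln_le_cancel_iff) auto
  also have "\<dots> = real (k*j) * ln 32" by (simp add: ln_realpow)
  also have "\<dots> = 5 * real k * real j * ln 2"
  proof -
    have "ln (32::real) = ln (2^5)" by simp
    also have "\<dots> = 5 * ln 2" by (simp only: ln_realpow)
    finally show ?thesis by simp
  qed
  also have "\<dots> \<le> 5 * real k * (V/e) * ln 2"
    using fj(1) by (intro mult_right_mono mult_left_mono) auto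
  also have "\<dots> = 5 * V / e * ln (real n)" unfolding lnn by simp
  finally show "ln (real (card (P_family V k e))) \<le> 5 * V / e * ln (real n)" .
qed

end
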